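(* Let $\mathbf u\in\mathcal A^{\mathbb N}$ be a uniformly recurrent infinite word with finite defect. Then there exist a finite alphabet $\mathcal B$, a rich infinite word $\mathbf v\in\mathcal B^{\mathbb N}$ and a morphism $\varphi:\mathcal B^*\to\mathcal A^*$ of class $P_{ret}$ such that $\mathbf u=\varphi(\mathbf v)$. Moreover, $\mathbf v$ is uniformly recurrent.
   Context: For a finite word $w$, $\overline{w}$ denotes its reversal; $w$ is a palindrome if $w=\overline w$. The defect of a finite word $w$ is $D(w)=|w|+1-(\text{number of distinct palindromic factors of } w, \text{ including the empty word})$; the defect of an infinite word $\mathbf u$ is $D(\mathbf u)=\sup\{D(w): w \text{ a prefix of }\mathbf u\}$. An infinite word is rich if its defect is $0$, i.e., every prefix of length $n$ contains exactly $n+1$ distinct palindromes. An infinite word is uniformly recurrent if every factor occurs infinitely often with bounded gaps between consecutive occurrences. A morphism $\varphi:\mathcal B^*\to\mathcal A^*$ is of class $P_{ret}$ if there exists a palindrome $p\in\mathcal A^*$ such that: (a) $\varphi(b)p$ is a palindrome for every $b\in\mathcal B$; (b) for every $b\in\mathcal B$, $\varphi(b)p$ contains exactly two occurrences of $p$, one as a prefix and one as a suffix; (c) $\varphi(b)\ne\varphi(c)$ for distinct $b,c\in\mathcal B$. For $\mathbf v=v_0v_1\cdots$, $\varphi(\mathbf v)=\varphi(v_0)\varphi(v_1)\cdots$. *)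

theory Defs
  imports "HOL-Library.Sublist"
begin

definition palindrome :: "'a list \<Rightarrow> bool" where
  "palindrome w \<longleftrightarrow> rev w = w"

text \<open>Distinct palindromic factors (including the empty word).\<close>
definition pal_factors :: "'a list \<Rightarrow> 'a list set" where
  "pal_factors w = {p. sublist p w \<and> palindrome p}"

definition defect :: "'a list \<Rightarrow> int" where
  "defect w = int (length w) + 1 - int (card (pal_factors w))"

definition pref :: "(nat \<Rightarrow> 'a) \<Rightarrow> nat \<Rightarrow> 'a list" where
  "pref u n = map u [0..<n]"

definition finite_defect :: "(nat \<Rightarrow> 'a) \<Rightarrow> bool" where
  "finite_defect u \<longleftrightarrow> (\<exists>K. \<forall>n. defect (pref u n) \<le> K)"

definition rich :: "(nat \<Rightarrow> 'a) \<Rightarrow> bool" where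
  "rich u \<longleftrightarrow> (\<forall>n. defect (pref u n) = 0)"

definition occurs_at :: "'a list \<Rightarrow> (nat \<Rightarrow> 'a) \<Rightarrow> nat \<Rightarrow> bool" where
  "occurs_at w u i \<longleftrightarrow> map u [i..<i + length w] = w"

definition uniformly_recurrent :: "(nat \<Rightarrow> 'a) \<Rightarrow> bool" where
  "uniformly_recurrent u \<longleftrightarrow>
     (\<forall>w. (\<exists>i. occurs_at w u i) \<longrightarrow>
          (\<exists>K. \<forall>n. \<exists>i. n \<le> i \<and> i \<le> n + K \<and> occurs_at w u i))"

definition occ_positions :: "'a list \<Rightarrow> 'a list \<Rightarrow> nat set" where
  "occ_positions p w = {i. i + length p \<le> length w \<and> take (length p) (drop i w) = p}"

definition class_Pret :: "'b set \<Rightarrow> ('b \<Rightarrow> 'a list) \<Rightarrow> bool" where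
  "class_Pret B \<phi> \<longleftrightarrow>
     (\<exists>p. palindrome p \<and>
        (\<forall>b\<in>B. palindrome (\<phi> b @ p)) \<and>
        (\<forall>b\<in>B. \<phi> b \<noteq> [] \<and> occ_positions p (\<phi> b @ p) = {0, length (\<phi> b)}) \<and>
        inj_on \<phi> B)"

text \<open>u = phi(v) for a (non-erasing) morphism: every finite concatenation
  phi(v_0)...phi(v_{n-1}) is a prefix of u.\<close>
definition morph_image :: "('b \<Rightarrow> 'a list) \<Rightarrow> (nat \<Rightarrow> 'b) \<Rightarrow> (nat \<Rightarrow> 'a) \<Rightarrow> bool" where
  "morph_image \<phi> v u \<longleftrightarrow>
     (\<forall>n. let w = concat (map (\<lambda>i. \<phi> (v i)) [0..<n]) in pref u (length w) = w)"

end

theory Submission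
  imports Defs
begin


lemma pal_factors_finite: "finite (pal_factors w)"
proof -
  have "pal_factors w \<subseteq> {xs. set xs \<subseteq> set w \<and> length xs \<le> length w}"
    unfolding pal_factors_def using set_mono_sublist sublist_length_le by blast
  thus ?thesis by (rule finite_subset) (rule finite_lists_length_le, simp)
qed

definition lps :: "'a list \<Rightarrow> 'a list" where
  "lps w = drop (LEAST i. palindrome (drop i w)) w"

lemma pal_Nil[simp]: "palindrome []" by (simp add: palindrome_def)

lemma lps_pal: "palindrome (lps w)"
  unfolding lps_def by (rule LeastI[of _ "length w"]) simp

lemma lps_suffix: "suffix (lps w) w"
  unfolding lps_def by (rule suffix_drop)

lemma lps_longest:
  assumes "suffix q w" "palindrome q"
  shows "length q \<le> length (lps w)"
proof -
  from assms(1) obtain z where w: "w = z @ q" by (auto simp: suffix_def)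
  have "drop (length z) w = q" using w by simp
  hence "(LEAST i. palindrome (drop i w)) \<le> length z"
    using assms(2) by (intro Least_le) simp
  thus ?thesis unfolding lps_def using w by simp
qed

lemma suffix_same_len: "suffix a w \<Longrightarrow> suffix b w \<Longrightarrow> length a = length b \<Longrightarrow> a = b"
  by (metis suffix_same_cases suffix_def append_eq_append_conv append_Nil)

lemma pal_suffix_prefix:
  assumes "suffix p L" "palindrome p" "palindrome L"
  shows "prefix p L"
  using assms unfolding palindrome_def by (simp add: suffix_to_prefix)

lemma pal_factors_snoc:
  "pal_factors (w @ [a]) = insert (lps (w @ [a])) (pal_factors w)"
proof (rule set_eqI, rule iffI)
  fix p assume "p \<in> pal_factors (w @ [a])"
  hence p: "sublist p (w @ [a])" "palindrome p" by (auto simp: pal_factors_def)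
  show "p \<in> insert (lps (w @ [a])) (pal_factors w)"
  proof (cases "sublist p w")
    case True thus ?thesis using p by (simp add: pal_factors_def)
  next
    case False
    hence suf: "suffix p (w @ [a])" using p(1) by (simp add: sublist_snoc)
    let ?L = "lps (w @ [a])"
    have le: "length p \<le> length ?L" by (rule lps_longest[OF suf p(2)])
    show ?thesis
    proof (cases "length p = length ?L")
      case True thus ?thesis using suffix_same_len[OF suf lps_suffix] by simp
    next
      case False
      hence lt: "length p < length ?L" using le by simp
      have "suffix p ?L"
      proof -
        have "suffix p ?L \<or> suffix ?L p" using suffix_same_cases[OF suf lps_suffix] .
        moreover have "\<not> suffix ?L p" using lt suffix_length_le[of ?L p] by linarith
        ultimately show ?thesis by blast
      qed
      hence "prefix p ?L" using pal_suffix_prefix p(2) lps_pal by blast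
      then obtain z where Lz: "?L = p @ z" by (auto simp: prefix_def)
      with lt have "z \<noteq> []" by auto
      then obtain z' c where z: "z = z' @ [c]" by (metis rev_exhaust)
      obtain y where "w @ [a] = y @ ?L" using lps_suffix by (auto simp: suffix_def)
      hence "w = y @ p @ z'" using Lz z by simp
      hence "sublist p w" by (metis sublist_appendI)
      thus ?thesis using p(2) by (simp add: pal_factors_def)
    qed
  qed
next
  fix p assume "p \<in> insert (lps (w @ [a])) (pal_factors w)"
  thus "p \<in> pal_factors (w @ [a])"
  proof
    assume "p = lps (w @ [a])"
    thus ?thesis using lps_pal[of "w @ [a]"] suffix_imp_sublist[OF lps_suffix[of "w @ [a]"]]
      by (simp add: pal_factors_def)
  next
    assume "p \<in> pal_factors w"
    hence "sublist p w" "palindrome p" by (auto simp: pal_factors_def)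
    moreover have "sublist w (w @ [a])" by (rule sublist_append_rightI)
    ultimately show ?thesis unfolding pal_factors_def using sublist_order.order_trans by blast
  qed
qed

lemma defect_snoc:
  "defect (w @ [a]) = defect w + (if sublist (lps (w @ [a])) w then 1 else 0)"
proof -
  have "lps (w @ [a]) \<in> pal_factors w \<longleftrightarrow> sublist (lps (w @ [a])) w"
    by (auto simp: pal_factors_def intro: lps_pal)
  thus ?thesis unfolding defect_def pal_factors_snoc
    using pal_factors_finite[of w] by (auto simp: card_insert_if)
qed

lemma defect_snoc_mono: "defect w \<le> defect (w @ [a])"
  using defect_snoc[of w a] by simp

lemma pal_factors_rev: "pal_factors (rev w) = pal_factors w"
  unfolding pal_factors_def palindrome_def by (rule Collect_cong) (metis sublist_rev_right)

lemma defect_rev: "defect (rev w) = defect w"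
  unfolding defect_def by (simp add: pal_factors_rev)

lemma defect_cons_mono: "defect w \<le> defect (a # w)"
proof -
  have "defect (rev w) \<le> defect (rev w @ [a])" by (rule defect_snoc_mono)
  thus ?thesis by (metis defect_rev rev.simps(2))
qed

lemma defect_append_mono: "defect y \<le> defect (x @ y @ z)"
proof -
  have "defect y \<le> defect (y @ z)"
  proof (induction z rule: rev_induct)
    case (snoc c z) thus ?case using defect_snoc_mono[of "y @ z" c] by simp
  qed simp
  also have "\<dots> \<le> defect (x @ y @ z)"
  proof (induction x)
    case (Cons c x) thus ?case using defect_cons_mono[of "x @ y @ z" c] by simp
  qed simp
  finally show ?thesis .
qed

lemma defect_sublist_mono: "sublist y w \<Longrightarrow> defect y \<le> defect w"
  by (auto simp: sublist_def intro: defect_append_mono)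

lemma defect_Nil: "defect [] = 0"
proof -
  have e: "pal_factors [] = {[]}" by (auto simp: pal_factors_def)
  have "card (pal_factors []) = 1" unfolding e by simp
  thus ?thesis by (simp add: defect_def)
qed



lemma cons_jump:
  assumes "prefix P (a # w)" "palindrome P"
    and "\<And>Q. prefix Q (a # w) \<Longrightarrow> palindrome Q \<Longrightarrow> length Q \<le> length P"
    and "sublist P w"
  shows "defect (a # w) = defect w + 1"
proof -
  have r: "rev (a # w) = rev w @ [a]" by simp
  let ?L = "lps (rev w @ [a])"
  have sP: "suffix P (rev w @ [a])"
    using assms(1,2) by (metis palindrome_def r suffix_to_prefix rev_rev_ident)
  have l1: "length P \<le> length ?L" using lps_longest[OF sP assms(2)] .
  have "prefix (rev ?L) (a # w)"
    using lps_suffix[of "rev w @ [a]"] suffix_to_prefix[of ?L "rev w @ [a]"] by simp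
  moreover have "palindrome (rev ?L)" using lps_pal by (metis palindrome_def)
  ultimately have "length (rev ?L) \<le> length P" using assms(3) by blast
  hence "length ?L = length P" using l1 by simp
  hence LP: "?L = P" using suffix_same_len[OF lps_suffix sP] by simp
  have "sublist ?L (rev w)" using assms(4) LP assms(2)
    by (metis palindrome_def sublist_rev_right)
  hence "defect (rev w @ [a]) = defect (rev w) + 1" using defect_snoc[of "rev w" a] by simp
  thus ?thesis by (metis defect_rev r)
qed

definition seg :: "(nat \<Rightarrow> 'a) \<Rightarrow> nat \<Rightarrow> nat \<Rightarrow> 'a list" where
  "seg u i j = map u [i..<j]"

lemma pref_seg: "pref u n = seg u 0 n" by (simp add: pref_def seg_def)

lemma seg_split: "i \<le> j \<Longrightarrow> j \<le> k \<Longrightarrow> seg u i k = seg u i j @ seg u j k"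
  unfolding seg_def by (metis map_append le_Suc_ex upt_add_eq_append)

lemma length_seg[simp]: "length (seg u i j) = j - i" by (simp add: seg_def)

lemma nth_seg: "k < j - i \<Longrightarrow> seg u i j ! k = u (i + k)" by (simp add: seg_def)

lemma sublist_seg: "i \<le> j \<Longrightarrow> j \<le> k \<Longrightarrow> k \<le> l \<Longrightarrow> sublist (seg u j k) (seg u i l)"
proof -
  assume a: "i \<le> j" "j \<le> k" "k \<le> l"
  have "seg u i l = seg u i j @ seg u j k @ seg u k l" using a seg_split
    by (metis le_trans)
  thus ?thesis by (metis sublist_appendI)
qed

lemma occurs_at_seg: "occurs_at w u i \<longleftrightarrow> seg u i (i + length w) = w"
  by (simp add: occurs_at_def seg_def)

lemma occurs_at_nth: "occurs_at w u i \<longleftrightarrow> (\<forall>k<length w. u (i + k) = w ! k)"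
  unfolding occurs_at_seg list_eq_iff_nth_eq by (simp add: nth_seg seg_def)

definition palu :: "(nat \<Rightarrow> 'a) \<Rightarrow> nat \<Rightarrow> nat \<Rightarrow> bool" where
  "palu u t e \<longleftrightarrow> (\<forall>y. t \<le> y \<longrightarrow> y < e \<longrightarrow> u y = u (t + e - 1 - y))"

lemma palindrome_nth: "palindrome w \<longleftrightarrow> (\<forall>k<length w. w ! k = w ! (length w - 1 - k))"
proof
  assume "palindrome w"
  hence r: "rev w = w" by (simp add: palindrome_def)
  show "\<forall>k<length w. w ! k = w ! (length w - 1 - k)"
  proof (intro allI impI)
    fix k assume k: "k < length w"
    have "w ! k = rev w ! k" using r by simp
    also have "\<dots> = w ! (length w - Suc k)" using k by (rule rev_nth)
    finally show "w ! k = w ! (length w - 1 - k)" by simp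
  qed
next
  assume h: "\<forall>k<length w. w ! k = w ! (length w - 1 - k)"
  have "rev w = w"
  proof (rule nth_equalityI)
    fix k assume "k < length (rev w)"
    hence k: "k < length w" by simp
    have e: "w ! k = w ! (length w - 1 - k)" using h k by blast
    have "rev w ! k = w ! (length w - Suc k)" using k by (rule rev_nth)
    also have "length w - Suc k = length w - 1 - k" by simp
    finally show "rev w ! k = w ! k" using e by metis
  qed simp
  thus "palindrome w" by (simp add: palindrome_def)
qed

lemma palu_iff: "t \<le> e \<Longrightarrow> palindrome (seg u t e) \<longleftrightarrow> palu u t e"
proof
  assume te: "t \<le> e"
  { assume pa: "palindrome (seg u t e)"
    have h0: "\<forall>k<e - t. seg u t e ! k = seg u t e ! (e - t - 1 - k)"
      using pa unfolding palindrome_nth length_seg .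
    show "palu u t e" unfolding palu_def
    proof (intro allI impI)
      fix y assume y: "t \<le> y" "y < e"
      have yt: "y - t < e - t" using y by simp
      have "seg u t e ! (y - t) = seg u t e ! (e - t - 1 - (y - t))" using h0 yt by blast
      moreover have "seg u t e ! (y - t) = u y" using y by (simp add: nth_seg)
      moreover have "seg u t e ! (e - t - 1 - (y - t)) = u (t + e - 1 - y)"
        using y by (simp add: nth_seg)
      ultimately show "u y = u (t + e - 1 - y)" by metis
    qed }
  { assume p: "palu u t e"
    show "palindrome (seg u t e)" unfolding palindrome_nth
    proof (intro allI impI)
      fix k assume "k < length (seg u t e)"
      hence k: "k < e - t" by simp
      have kk: "t \<le> t + k" "t + k < e" using k by auto
      have "u (t + k) = u (t + e - 1 - (t + k))" using p kk unfolding palu_def by blast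
      also have "t + e - 1 - (t + k) = t + (e - t - 1 - k)" using k by simp
      finally have X: "u (t + k) = u (t + (e - t - 1 - k))" .
      have "seg u t e ! k = u (t + k)" using k by (rule nth_seg)
      moreover have "seg u t e ! (length (seg u t e) - 1 - k) = u (t + (e - t - 1 - k))"
        using k by (simp add: nth_seg)
      ultimately show "seg u t e ! k = seg u t e ! (length (seg u t e) - 1 - k)"
        using X by metis
    qed }
qed

lemma palu_mirror_occ:
  assumes "palu u t e" "palindrome w" "occurs_at w u y" "t \<le> y" "y + length w \<le> e"
  shows "occurs_at w u (t + e - y - length w)"
  unfolding occurs_at_nth
proof (intro allI impI)
  fix k assume k: "k < length w"
  have a: "t \<le> t + e - y - length w + k" "t + e - y - length w + k < e" using k assms(4,5) by auto
  have "u (t + e - y - length w + k) = u (t + e - 1 - (t + e - y - length w + k))"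
    using assms(1) a unfolding palu_def by blast
  also have "t + e - 1 - (t + e - y - length w + k) = y + (length w - 1 - k)"
    using k assms(4,5) by simp
  also have "u (y + (length w - 1 - k)) = w ! (length w - 1 - k)"
  proof -
    have "length w - 1 - k < length w" using k by simp
    thus ?thesis using assms(3) unfolding occurs_at_nth by blast
  qed
  also have "\<dots> = w ! k" using assms(2) k unfolding palindrome_nth by metis
  finally show "u (t + e - y - length w + k) = w ! k" .
qed



locale W =
  fixes u :: "nat \<Rightarrow> 'a"
  assumes fin: "finite (range u)"
    and ur: "uniformly_recurrent u"
    and fd: "finite_defect u"
begin

definition Dn :: "nat \<Rightarrow> int" where "Dn n = defect (pref u n)"

lemma pref_Suc: "pref u (Suc n) = pref u n @ [u n]"
  by (simp add: pref_def)

lemma Dn_Suc: "Dn (Suc n) = Dn n + (if sublist (lps (pref u (Suc n))) (pref u n) then 1 else 0)"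
  unfolding Dn_def pref_Suc by (rule defect_snoc)

lemma Dn_mono: "m \<le> n \<Longrightarrow> Dn m \<le> Dn n"
proof (induction n)
  case (Suc n) thus ?case using Dn_Suc[of n] by (cases "m = Suc n") auto
qed simp

lemma Dn_0: "Dn 0 = 0" by (simp add: Dn_def pref_def defect_Nil)

lemma ex_m0: "\<exists>m. \<forall>n. Dn n \<le> Dn m"
proof -
  obtain K where K: "\<And>n. Dn n \<le> K" using fd unfolding finite_defect_def Dn_def by blast
  have sub: "range Dn \<subseteq> {0..K}" using K Dn_mono[of 0] Dn_0 by auto
  hence f: "finite (range Dn)" by (rule finite_subset) simp
  have "Max (range Dn) \<in> range Dn" using f by (intro Max_in) auto
  then obtain m where "Dn m = Max (range Dn)" by auto
  thus ?thesis using f by (metis Max_ge rangeI)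
qed

definition m0 :: nat where "m0 = (SOME m. \<forall>n. Dn n \<le> Dn m)"

lemma m0_max: "Dn n \<le> Dn m0"
  using someI_ex[OF ex_m0] unfolding m0_def by blast

lemma Dn_const: "m0 \<le> n \<Longrightarrow> Dn n = Dn m0"
  using Dn_mono m0_max by (simp add: order_antisym)

lemma zone_nosub: "m0 < n \<Longrightarrow> \<not> sublist (lps (pref u n)) (pref u (n - 1))"
proof -
  assume a: "m0 < n"
  then obtain k where n: "n = Suc k" and "m0 \<le> k" by (cases n) auto
  hence "Dn (Suc k) = Dn k" using Dn_const[of "Suc k"] Dn_const[of k] by simp
  thus ?thesis using Dn_Suc[of k] n by (auto split: if_splits)
qed

lemma ur_gap: "occurs_at w u i \<Longrightarrow> \<exists>K. \<forall>n. \<exists>j. n \<le> j \<and> j \<le> n + K \<and> occurs_at w u j"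
  using ur unfolding uniformly_recurrent_def by blast

lemma ur_later: "occurs_at w u i \<Longrightarrow> \<exists>j. n \<le> j \<and> occurs_at w u j"
  using ur_gap by blast

lemma occurs_pref: "occurs_at (pref u n) u 0"
  by (simp add: occurs_at_seg pref_seg)

lemma long_pal_prefix: "\<exists>n\<ge>L. palindrome (pref u n)"
proof (rule ccontr)
  assume neg: "\<not> ?thesis"
  have nA: "n < L" if "palindrome (pref u n)" for n
  proof (rule ccontr)
    assume "\<not> n < L"
    hence "n \<ge> L" by simp
    with that neg show False by blast
  qed
  let ?A = "{n. palindrome (pref u n)}"
  have finA: "finite ?A"
  proof (rule finite_subset[of _ "{..<L}"])
    show "?A \<subseteq> {..<L}" using nA by blast
  qed simp
  have "0 \<in> ?A" by (simp add: pref_def)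
  hence n1A: "Max ?A \<in> ?A" using finA by (intro Max_in) auto
  define n1 where "n1 = Max ?A"
  have n1max: "\<And>n. palindrome (pref u n) \<Longrightarrow> n \<le> n1" unfolding n1_def using finA by (intro Max_ge) auto
  obtain i where i: "1 \<le> i" "occurs_at (pref u m0) u i" using ur_later[OF occurs_pref] by blast
  obtain j where j: "1 \<le> j" "occurs_at (pref u n1) u j" using ur_later[OF occurs_pref] by blast
  define c where "c = i + m0 + j + n1 + L + 1"
  have c0: "0 < c" using c_def by simp
  have split: "pref u c = u 0 # seg u 1 c" unfolding pref_seg seg_def
    using upt_conv_Cons[OF c0] by simp
  have "m0 \<le> c" using c_def by simp
  hence "Dn c = Dn m0" by (rule Dn_const)
  have "sublist (pref u m0) (seg u 1 c)"
    using i sublist_seg[of 1 i "i + m0" c u] unfolding occurs_at_seg by (simp add: c_def pref_def)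
  hence d1: "Dn m0 \<le> defect (seg u 1 c)" unfolding Dn_def by (rule defect_sublist_mono)
  have "defect (pref u c) = defect (seg u 1 c) + 1"
    unfolding split
  proof (rule cons_jump)
    show "prefix (pref u n1) (u 0 # seg u 1 c)"
      unfolding split[symmetric] pref_seg
      using seg_split[of 0 n1 c u] c_def by (simp add: prefix_def) 
    show "palindrome (pref u n1)" using n1A n1_def by simp
    fix Q assume Q: "prefix Q (u 0 # seg u 1 c)" "palindrome Q"
    have "prefix Q (pref u c)" using Q(1) split by simp
    then obtain zs where zs: "pref u c = Q @ zs" by (auto simp: prefix_def)
    have lq: "length Q \<le> c" using arg_cong[OF zs, of length] by (simp add: pref_def)
    have "Q = take (length Q) (pref u c)" using zs by simp
    also have "\<dots> = pref u (length Q)" using lq by (simp add: pref_def take_map take_upt)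
    finally have "Q = pref u (length Q)" .
    hence "length Q \<le> n1" using n1max Q(2) by metis
    thus "length Q \<le> length (pref u n1)" by (simp add: pref_def)
  next
    show "sublist (pref u n1) (seg u 1 c)"
      using j sublist_seg[of 1 j "j + n1" c u] unfolding occurs_at_seg by (simp add: c_def pref_def)
  qed
  hence "Dn c = defect (seg u 1 c) + 1" by (simp add: Dn_def)
  thus False using d1 \<open>Dn c = Dn m0\<close> by simp
qed

end


context W begin

definition lp :: nat where "lp = (SOME n. n \<ge> m0 \<and> palindrome (pref u n))"
definition p :: "'a list" where "p = pref u lp"

lemma lp_props: "lp \<ge> m0" "palindrome p"
  using someI_ex[OF long_pal_prefix[of m0]] unfolding lp_def p_def by auto

lemma len_p[simp]: "length p = lp" by (simp add: p_def pref_def)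

definition occ :: "nat \<Rightarrow> bool" where "occ x \<longleftrightarrow> occurs_at p u x"

lemma occ0: "occ 0" unfolding occ_def p_def by (rule occurs_pref)

lemma occ_seg: "occ x \<longleftrightarrow> seg u x (x + lp) = p"
  unfolding occ_def occurs_at_seg by simp

lemma ex_Kp: "\<exists>K. \<forall>n. \<exists>j. n \<le> j \<and> j \<le> n + K \<and> occ j"
  using ur_gap[OF occ0[unfolded occ_def]] unfolding occ_def by blast

definition Kp :: nat where "Kp = (SOME K. \<forall>n. \<exists>j. n \<le> j \<and> j \<le> n + K \<and> occ j)"

lemma Kp: "\<exists>j. n \<le> j \<and> j \<le> n + Kp \<and> occ j"
  using someI_ex[OF ex_Kp] unfolding Kp_def by blast

lemma palu_occ: "occ b \<Longrightarrow> palu u b (b + lp)"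
  using lp_props(2) palu_iff[of b "b + lp" u] by (simp add: occ_seg)

lemma lps_seg:
  "lps (pref u n) = seg u (n - length (lps (pref u n))) n"
proof -
  define L where "L = lps (pref u n)"
  obtain z where z: "pref u n = z @ L" using lps_suffix L_def by (auto simp: suffix_def)
  have d: "drop (length z) (pref u n) = L" unfolding z by simp
  have "length z = n - length L"
    using arg_cong[OF z, of length] by (simp add: pref_def)
  hence "L = drop (n - length L) (pref u n)" using d by simp
  also have "\<dots> = seg u (n - length L) n" by (simp add: pref_def seg_def drop_map)
  finally show ?thesis unfolding L_def .
qed

lemma zone:
  assumes "m0 < n"
  defines "t \<equiv> n - length (lps (pref u n))"
  shows "t \<le> n" "palu u t n" "\<And>s. s < t \<Longrightarrow> \<not> occurs_at (seg u t n) u s"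
    "\<And>t'. t' \<le> n \<Longrightarrow> palu u t' n \<Longrightarrow> t \<le> t'"
proof -
  have L: "lps (pref u n) = seg u t n" using lps_seg t_def by simp
  show "t \<le> n" by (simp add: t_def)
  show "palu u t n" using lps_pal[of "pref u n"] L palu_iff[of t n u] \<open>t \<le> n\<close> by simp
  show "\<not> occurs_at (seg u t n) u s" if s: "s < t" for s
  proof
    assume "occurs_at (seg u t n) u s"
    hence e: "seg u s (s + (n - t)) = seg u t n" by (simp add: occurs_at_seg)
    have "sublist (seg u s (s + (n - t))) (seg u 0 (n - 1))"
      using s \<open>t \<le> n\<close> by (intro sublist_seg) auto
    hence "sublist (lps (pref u n)) (pref u (n - 1))" using e L by (simp add: pref_seg)
    thus False using zone_nosub assms(1) by blast
  qed
  show "t \<le> t'" if "t' \<le> n" "palu u t' n" for t'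
  proof -
    have "palindrome (seg u t' n)" using that palu_iff by blast
    moreover have "suffix (seg u t' n) (pref u n)"
      using seg_split[of 0 t' n u] that by (simp add: pref_seg suffix_def)
    ultimately have "length (seg u t' n) \<le> length (lps (pref u n))" by (rule lps_longest[rotated])
    thus ?thesis by (simp add: t_def)
  qed
qed

lemma palu_app: "palu u t e \<Longrightarrow> t \<le> y \<Longrightarrow> y < e \<Longrightarrow> u y = u (t + e - 1 - y)"
  unfolding palu_def by blast

lemma complete_return:
  "occ a \<Longrightarrow> occ b \<Longrightarrow> a < b \<Longrightarrow> (\<forall>x. a < x \<longrightarrow> x < b \<longrightarrow> \<not> occ x) \<Longrightarrow> palu u a (b + lp)"
proof (induction b arbitrary: a rule: less_induct)
  case (less b)
  note oa = less.prems(1) and ob = less.prems(2) and ab = less.prems(3) and btw = less.prems(4)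
  define n where "n = b + lp"
  have mn: "m0 < n" using lp_props(1) ab n_def by simp
  define t where "t = n - length (lps (pref u n))"
  note Z = zone[OF mn, folded t_def]
  have tb: "t \<le> b" using Z(4)[of b] palu_occ[OF ob] n_def by simp
  have "t \<noteq> b"
  proof
    assume tb0: "t = b"
    hence "seg u t n = p" using ob occ_seg n_def by simp
    hence "\<not> occurs_at p u a" using Z(3)[of a] ab tb0 by simp
    thus False using oa occ_def by simp
  qed
  hence tb': "t < b" using tb by simp
  have "occurs_at p u (t + n - b - length p)"
    using palu_mirror_occ[OF Z(2) lp_props(2) ob[unfolded occ_def]] tb n_def by simp
  hence ot: "occ t" using n_def by (simp add: occ_def)
  consider "a < t" | "t = a" | "t < a" by linarith
  thus ?case
  proof cases
    case 1 thus ?thesis using btw tb' ot by blast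
  next
    case 2 thus ?thesis using Z(2) n_def by simp
  next
    case 3
    define b' where "b' = t + b - a"
    have "occurs_at p u (t + n - a - length p)"
      using palu_mirror_occ[OF Z(2) lp_props(2) oa[unfolded occ_def]] 3 ab n_def by simp
    hence ob': "occ b'" using n_def b'_def 3 ab by (simp add: occ_def)
    have b'b: "b' < b" "t < b'" using 3 ab b'_def by auto
    have btw': "\<forall>x. t < x \<longrightarrow> x < b' \<longrightarrow> \<not> occ x"
    proof (intro allI impI)
      fix x assume x: "t < x" "x < b'"
      show "\<not> occ x"
      proof
        assume "occ x"
        hence "occurs_at p u (t + n - x - length p)"
          using palu_mirror_occ[OF Z(2) lp_props(2)] x b'b n_def by (simp add: occ_def)
        moreover have "t + n - x - length p = t + b - x" using n_def x b'b by simp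
        ultimately have "occ (t + b - x)" by (simp add: occ_def)
        moreover have "a < t + b - x" "t + b - x < b" using x b'_def 3 ab by auto
        ultimately show False using btw by blast
      qed
    qed
    have IH: "palu u t (b' + lp)" using less.IH[OF b'b(1) ot ob' b'b(2) btw'] .
    show ?thesis unfolding palu_def
    proof (intro allI impI)
      fix y assume y: "a \<le> y" "y < b + lp"
      have y1: "t \<le> y" "y < n" using y 3 n_def by auto
      have y2: "t \<le> t + n - 1 - y" "t + n - 1 - y < b' + lp" using y 3 ab n_def b'_def by auto
      have e1: "t + (b' + lp) - 1 - (t + n - 1 - y) = y - a + t"
        using y 3 ab n_def b'_def by simp
      have y3: "t \<le> a + (b + lp) - 1 - y" "a + (b + lp) - 1 - y < n" using y 3 ab n_def by auto
      have e2: "t + n - 1 - (a + (b + lp) - 1 - y) = y - a + t" using y 3 ab n_def by simp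
      have "u y = u (t + n - 1 - y)" by (rule palu_app[OF Z(2) y1])
      also have "\<dots> = u (t + (b' + lp) - 1 - (t + n - 1 - y))" by (rule palu_app[OF IH y2])
      also have "\<dots> = u (y - a + t)" using e1 by simp
      also have "\<dots> = u (t + n - 1 - (a + (b + lp) - 1 - y))" using e2 by simp
      also have "\<dots> = u (a + (b + lp) - 1 - y)" by (rule palu_app[OF Z(2) y3, symmetric])
      finally show "u y = u (a + (b + lp) - 1 - y)" .
    qed
  qed
qed

end


lemma take_drop_seg: "a + i + l \<le> e \<Longrightarrow> take l (drop i (seg f a e)) = seg f (a + i) (a + i + l)"
  by (simp add: seg_def drop_map take_map take_upt)

lemma pal_prefix_of_pal:
  assumes "palindrome (w @ p)" "palindrome p" shows "prefix p (w @ p)"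
proof -
  have "suffix p (w @ p)" unfolding suffix_def by blast
  thus ?thesis using pal_suffix_prefix[of p "w @ p"] assms by blast
qed

lemma rev_concat_pal:
  assumes "\<forall>w\<in>set ws. palindrome (w @ p)" "palindrome p"
  shows "rev (concat ws @ p) = concat (rev ws) @ p"
  using assms(1)
proof (induction ws)
  case Nil thus ?case using assms(2) by (simp add: palindrome_def)
next
  case (Cons w ws)
  have pw: "p @ rev w = w @ p"
  proof -
    have "rev (w @ p) = w @ p" using Cons.prems by (simp add: palindrome_def)
    thus ?thesis using assms(2) by (simp add: palindrome_def)
  qed
  have "rev (concat (w # ws) @ p) = rev (concat ws @ p) @ rev w" by simp
  also have "\<dots> = concat (rev ws) @ p @ rev w" using Cons by simp
  also have "\<dots> = concat (rev ws) @ w @ p" using pw by simp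
  finally show ?case by simp
qed

lemma sublist_seg0:
  assumes "sublist w (seg f 0 n)" shows "\<exists>j. j + length w \<le> n \<and> seg f j (j + length w) = w"
proof -
  obtain ps ss where e: "seg f 0 n = ps @ w @ ss" using assms by (auto simp: sublist_def)
  have len: "length ps + length w \<le> n" using arg_cong[OF e, of length] by simp
  have "take (length w) (drop (length ps) (seg f 0 n)) = w" unfolding e by simp
  moreover have "take (length w) (drop (length ps) (seg f 0 n)) = seg f (length ps) (length ps + length w)"
    using take_drop_seg[of 0 "length ps" "length w" n f] len by simp
  ultimately show ?thesis using len by metis
qed

lemma lps_seg_gen:
  "lps (pref f n) = seg f (n - length (lps (pref f n))) n"
proof -
  define L where "L = lps (pref f n)"
  obtain z where z: "pref f n = z @ L" using lps_suffix L_def by (auto simp: suffix_def)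
  have d: "drop (length z) (pref f n) = L" unfolding z by simp
  have "length z = n - length L"
    using arg_cong[OF z, of length] by (simp add: pref_def)
  hence "L = drop (n - length L) (pref f n)" using d by simp
  also have "\<dots> = seg f (n - length L) n" by (simp add: pref_def seg_def drop_map)
  finally show ?thesis unfolding L_def .
qed

context W begin

definition nxt :: "nat \<Rightarrow> nat" where "nxt x = (LEAST j. x < j \<and> occ j)"

lemma nxt_ex: "\<exists>j. x < j \<and> j \<le> x + 1 + Kp \<and> occ j"
proof -
  obtain j where "x + 1 \<le> j" "j \<le> x + 1 + Kp" "occ j" using Kp[of "x + 1"] by blast
  thus ?thesis by (intro exI[of _ j]) simp
qed

lemma nxt_props: "x < nxt x" "occ (nxt x)" "nxt x \<le> x + 1 + Kp"
  "\<And>j. x < j \<Longrightarrow> j < nxt x \<Longrightarrow> \<not> occ j"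
proof -
  obtain j where j: "x < j" "j \<le> x + 1 + Kp" "occ j" using nxt_ex by blast
  have "x < nxt x \<and> occ (nxt x)" unfolding nxt_def by (rule LeastI[of _ j]) (use j in simp)
  thus "x < nxt x" "occ (nxt x)" by auto
  have "nxt x \<le> j" unfolding nxt_def by (rule Least_le) (use j in simp)
  thus "nxt x \<le> x + 1 + Kp" using j by simp
  show "\<not> occ i" if "x < i" "i < nxt x" for i
    using not_less_Least[of i "\<lambda>j. x < j \<and> occ j"] that unfolding nxt_def by blast
qed

definition pos :: "nat \<Rightarrow> nat" where "pos k = (nxt ^^ k) 0"

lemma pos_0[simp]: "pos 0 = 0" by (simp add: pos_def)
lemma pos_Suc: "pos (Suc k) = nxt (pos k)" by (simp add: pos_def)

lemma occ_pos: "occ (pos k)"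
  by (cases k) (auto simp: pos_Suc occ0 nxt_props)

lemma pos_less: "pos k < pos (Suc k)" by (simp add: pos_Suc nxt_props)

lemma pos_smono: "strict_mono pos"
  by (simp add: strict_mono_Suc_iff pos_less)

lemma pos_gap: "pos (Suc k) \<le> pos k + 1 + Kp" using nxt_props(3)[of "pos k"] by (simp add: pos_Suc)

lemma no_between: "pos k < x \<Longrightarrow> x < pos (Suc k) \<Longrightarrow> \<not> occ x"
  unfolding pos_Suc by (rule nxt_props(4))

lemma pos_add: "pos k + d \<le> pos (k + d)"
proof (induction d)
  case (Suc d) thus ?case using pos_less[of "k + d"] by simp
qed simp

lemma pos_cover: "\<exists>k. pos k \<le> x \<and> x < pos (Suc k)"
proof (induction x)
  case 0 thus ?case using pos_less[of 0] by (intro exI[of _ 0]) simp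
next
  case (Suc x)
  then obtain k where k: "pos k \<le> x" "x < pos (Suc k)" by blast
  show ?case
  proof (cases "Suc x < pos (Suc k)")
    case True thus ?thesis using k by (intro exI[of _ k]) simp
  next
    case False
    hence "Suc x = pos (Suc k)" using k by simp
    thus ?thesis using pos_less[of "Suc k"] by (intro exI[of _ "Suc k"]) simp
  qed
qed

lemma occ_is_pos: "occ x \<Longrightarrow> \<exists>k. pos k = x"
proof -
  assume o: "occ x"
  obtain k where k: "pos k \<le> x" "x < pos (Suc k)" using pos_cover by blast
  have "x = pos k"
  proof (rule ccontr)
    assume "x \<noteq> pos k"
    hence "pos k < x" using k by simp
    thus False using no_between k o by blast
  qed
  thus ?thesis by blast
qed

definition r :: "nat \<Rightarrow> 'a list" where "r k = seg u (pos k) (pos (Suc k))"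

lemma r_len: "length (r k) = pos (Suc k) - pos k" by (simp add: r_def)

lemma r_ne: "r k \<noteq> []" using pos_less[of k] by (simp add: r_def seg_def)

lemma r_p: "r k @ p = seg u (pos k) (pos (Suc k) + lp)"
proof -
  have "seg u (pos k) (pos (Suc k) + lp) = r k @ seg u (pos (Suc k)) (pos (Suc k) + lp)"
    unfolding r_def using pos_less[of k] by (intro seg_split) auto
  thus ?thesis using occ_pos[of "Suc k"] occ_seg by simp
qed

lemma r_pal: "palindrome (r k @ p)"
proof -
  have "palu u (pos k) (pos (Suc k) + lp)"
    using complete_return[OF occ_pos occ_pos pos_less] no_between by blast
  thus ?thesis unfolding r_p using palu_iff[of "pos k" "pos (Suc k) + lp" u] pos_less[of k] by simp
qed

lemma occ_in_block:
  assumes "occurs_at (w @ p) u a" "occ (a + i)" "i \<le> length w"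
  shows "i \<in> occ_positions p (w @ p)"
proof -
  have s: "seg u a (a + (length w + lp)) = w @ p" using assms(1) by (simp add: occurs_at_seg)
  have "take lp (drop i (w @ p)) = take lp (drop i (seg u a (a + (length w + lp))))" using s by simp
  also have "\<dots> = seg u (a + i) (a + i + lp)" using assms(3) by (intro take_drop_seg) simp
  also have "\<dots> = p" using assms(2) occ_seg by simp
  finally show ?thesis unfolding occ_positions_def using assms(3) by simp
qed

lemma r_occ: "occ_positions p (r k @ p) = {0, length (r k)}"
proof (rule set_eqI, rule iffI)
  fix i assume i: "i \<in> occ_positions p (r k @ p)"
  hence il: "i \<le> length (r k)" and t: "take lp (drop i (r k @ p)) = p"
    by (auto simp: occ_positions_def)
  have "take lp (drop i (r k @ p)) = seg u (pos k + i) (pos k + i + lp)"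
    unfolding r_p using il r_len[of k] pos_less[of k] by (intro take_drop_seg) simp
  hence "occ (pos k + i)" using t occ_seg by simp
  hence "\<not> (pos k < pos k + i \<and> pos k + i < pos (Suc k))" using no_between by blast
  thus "i \<in> {0, length (r k)}" using il r_len[of k] by auto
next
  fix i assume "i \<in> {0, length (r k)}"
  moreover have "occurs_at (r k @ p) u (pos k)"
    unfolding occurs_at_seg using r_p[of k] pos_less[of k] by (simp add: r_len)
  moreover have "occ (pos k + length (r k))" using occ_pos[of "Suc k"] pos_less[of k] by (simp add: r_len)
  ultimately show "i \<in> occ_positions p (r k @ p)"
    using occ_in_block[of "r k" "pos k"] occ_pos[of k] by auto
qed

lemma prefix_p_concat: "set ws \<subseteq> range r \<Longrightarrow> prefix p (concat ws @ p)"
proof (induction ws)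
  case Nil thus ?case by simp
next
  case (Cons w ws)
  then obtain j where w: "w = r j" by auto
  have "prefix p (w @ p)" using pal_prefix_of_pal r_pal lp_props(2) w by blast
  moreover have "prefix (w @ p) (concat (w # ws) @ p)" using Cons by (auto simp: prefix_def)
  ultimately show ?case using prefix_order.order_trans by blast
qed

lemma decomp:
  "set ws \<subseteq> range r \<Longrightarrow> occurs_at (concat ws @ p) u (pos k) \<Longrightarrow> ws = map r [k..<k + length ws]"
proof (induction ws arbitrary: k)
  case Nil thus ?case by simp
next
  case (Cons w ws)
  then obtain j where wj: "w = r j" by auto
  have sw: "set ws \<subseteq> range r" using Cons.prems by simp
  let ?W = "concat ws @ p"
  have occW: "occurs_at (w @ ?W) u (pos k)" using Cons.prems by simp
  have sW: "seg u (pos k) (pos k + (length w + length ?W)) = w @ ?W"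
    using occW by (simp add: occurs_at_seg)
  have spl: "seg u (pos k) (pos k + (length w + length ?W)) =
      seg u (pos k) (pos k + length w) @ seg u (pos k + length w) (pos k + (length w + length ?W))"
    by (rule seg_split) simp_all
  have spl2: "seg u (pos k) (pos k + length w) = w \<and>
      seg u (pos k + length w) (pos k + (length w + length ?W)) = ?W"
    using sW spl by (simp add: append_eq_append_conv)
  have occ2: "occurs_at ?W u (pos k + length w)"
    using spl2 by (simp add: occurs_at_seg add.assoc)
  have pW: "prefix p ?W" using prefix_p_concat[OF sw] .
  have lW: "lp \<le> length ?W" by simp
  have "occ (pos k + length w)"
  proof -
    obtain zs where zs: "?W = p @ zs" using pW by (auto simp: prefix_def)
    have "take lp ?W = p" unfolding zs by simp
    moreover have "take lp ?W = take lp (seg u (pos k + length w) (pos k + length w + length ?W))"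
      using occ2 by (simp add: occurs_at_seg)
    moreover have "\<dots> = seg u (pos k + length w) (pos k + length w + lp)"
      using take_drop_seg[of "pos k + length w" 0 lp "pos k + length w + length ?W" u] lW by simp
    ultimately show ?thesis using occ_seg by simp
  qed
  hence ge: "pos (Suc k) \<le> pos k + length w"
    using no_between[of k "pos k + length w"] r_ne[of j] wj by (cases "w = []") force+
  have tW: "take lp ?W = p"
  proof -
    obtain zs where zs: "?W = p @ zs" using pW by (auto simp: prefix_def)
    show ?thesis unfolding zs by simp
  qed
  have occWp: "occurs_at (w @ p) u (pos k)"
  proof -
    have "seg u (pos k) (pos k + (length w + lp)) =
        take (length w + lp) (drop 0 (seg u (pos k) (pos k + (length w + length ?W))))"
      using take_drop_seg[of "pos k" 0 "length w + lp" "pos k + (length w + length ?W)" u] lW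
      by (simp add: add.assoc)
    also have "\<dots> = take (length w + lp) (w @ ?W)" using sW by simp
    also have "\<dots> = w @ take lp ?W" by simp
    also have "\<dots> = w @ p" using tW by simp
    finally show ?thesis by (simp add: occurs_at_seg)
  qed
  have le: "pos (Suc k) - pos k \<le> length w" using ge by simp
  have eq: "length w = pos (Suc k) - pos k"
  proof (rule ccontr)
    assume "length w \<noteq> pos (Suc k) - pos k"
    hence lt: "pos (Suc k) - pos k < length w" using le by simp
    have "pos (Suc k) - pos k \<in> occ_positions p (w @ p)"
      using occ_in_block[OF occWp, of "pos (Suc k) - pos k"] occ_pos[of "Suc k"] pos_less[of k] lt by simp
    hence "pos (Suc k) - pos k \<in> {0, length w}" using r_occ[of j] wj by simp
    thus False using lt pos_less[of k] by auto
  qed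
  have wk: "w = r k"
    using spl2 unfolding r_def using eq pos_less[of k] by simp
  have "occurs_at ?W u (pos (Suc k))" using occ2 eq pos_less[of k] by simp
  hence "ws = map r [Suc k..<Suc k + length ws]" using Cons.IH[OF sw] by blast
  moreover have "[k..<k + length (w # ws)] = k # [Suc k..<Suc k + length ws]"
    by (simp add: upt_conv_Cons del: upt_Suc)
  ultimately show ?case using wk by (simp del: upt_Suc)
qed

end


lemma palu_app_gen: "palu f t e \<Longrightarrow> t \<le> y \<Longrightarrow> y < e \<Longrightarrow> f y = f (t + e - 1 - y)"
  unfolding palu_def by blast

lemma pref_Suc_gen: "pref f (Suc n) = pref f n @ [f n]" by (simp add: pref_def)

context W begin

lemma finite_R: "finite (range r)"
proof -
  have lr: "length (r k) \<le> Kp + 1" for k using pos_gap[of k] pos_less[of k] by (simp add: r_len)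
  have "range r \<subseteq> {xs. set xs \<subseteq> range u \<and> length xs \<le> Kp + 1}"
    using lr by (auto simp: r_def seg_def)
  thus ?thesis by (rule finite_subset) (rule finite_lists_length_le[OF fin])
qed

definition enc :: "'a list \<Rightarrow> nat" where "enc = (SOME f. inj_on f (range r))"

lemma enc_inj: "inj_on enc (range r)"
proof -
  have "\<exists>f::'a list \<Rightarrow> nat. inj_on f (range r)"
    using finite_imp_inj_to_nat_seg[OF finite_R] by blast
  thus ?thesis unfolding enc_def by (rule someI_ex)
qed

definition v :: "nat \<Rightarrow> nat" where "v k = enc (r k)"
definition phi :: "nat \<Rightarrow> 'a list" where "phi = inv_into (range r) enc"

lemma phi_v: "phi (v k) = r k"
  unfolding phi_def v_def by (rule inv_into_f_f[OF enc_inj]) simp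

lemma v_eq: "v i = v j \<longleftrightarrow> r i = r j"
  unfolding v_def using enc_inj by (auto dest: inj_onD)

lemma seg_concat: "x \<le> y \<Longrightarrow> concat (map r [x..<y]) = seg u (pos x) (pos y)"
proof (induction y)
  case 0 thus ?case by (simp add: seg_def)
next
  case (Suc y)
  show ?case
  proof (cases "x = Suc y")
    case True thus ?thesis by (simp add: seg_def)
  next
    case False
    hence xy: "x \<le> y" using Suc.prems by simp
    have "concat (map r [x..<Suc y]) = seg u (pos x) (pos y) @ r y" using Suc.IH[OF xy] xy by simp
    also have "\<dots> = seg u (pos x) (pos (Suc y))" unfolding r_def
      using pos_less[of y] strict_mono_less_eq[OF pos_smono, of x y] xy
      by (intro seg_split[symmetric]) auto
    finally show ?thesis .
  qed
qed

lemma U_seg: "x \<le> y \<Longrightarrow> concat (map r [x..<y]) @ p = seg u (pos x) (pos y + lp)"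
proof -
  assume xy: "x \<le> y"
  have "seg u (pos x) (pos y + lp) = seg u (pos x) (pos y) @ seg u (pos y) (pos y + lp)"
    using strict_mono_less_eq[OF pos_smono, of x y] xy by (intro seg_split) auto
  thus ?thesis using seg_concat[OF xy] occ_pos[of y] occ_seg by simp
qed

lemma r_pals: "\<forall>w\<in>set (map r xs). palindrome (w @ p)" using r_pal by auto

lemma pal_v_to_u:
  assumes xy: "x \<le> y" and h: "\<And>t. t < y - x \<Longrightarrow> v (x + t) = v (y - 1 - t)"
  shows "palu u (pos x) (pos y + lp)"
proof -
  have m: "map r (rev [x..<y]) = map r [x..<y]"
  proof (rule nth_equalityI)
    fix t assume "t < length (map r (rev [x..<y]))"
    hence t: "t < y - x" by simp
    have "map r (rev [x..<y]) ! t = r (y - 1 - t)" using t by (simp add: rev_nth)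
    also have "\<dots> = r (x + t)" using h[OF t] v_eq by simp
    also have "\<dots> = map r [x..<y] ! t" using t by simp
    finally show "map r (rev [x..<y]) ! t = map r [x..<y] ! t" .
  qed simp
  have "rev (concat (map r [x..<y]) @ p) = concat (rev (map r [x..<y])) @ p"
    using rev_concat_pal[OF r_pals lp_props(2)] .
  also have "\<dots> = concat (map r [x..<y]) @ p" using m by (simp add: rev_map)
  finally have "palindrome (seg u (pos x) (pos y + lp))" using U_seg[OF xy] by (simp add: palindrome_def)
  thus ?thesis using palu_iff[of "pos x" "pos y + lp" u] strict_mono_less_eq[OF pos_smono, of x y] xy
    by simp
qed

lemma pal_u_to_v:
  assumes xy: "x \<le> y" and pu: "palu u (pos x) (pos y + lp)" and t: "t < y - x"
  shows "v (x + t) = v (y - 1 - t)"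
proof -
  have "palindrome (seg u (pos x) (pos y + lp))"
    using palu_iff[of "pos x" "pos y + lp" u] pu strict_mono_less_eq[OF pos_smono, of x y] xy by simp
  hence "rev (concat (map r [x..<y]) @ p) = concat (map r [x..<y]) @ p"
    using U_seg[OF xy] by (simp add: palindrome_def)
  hence e: "concat (map r (rev [x..<y])) @ p = concat (map r [x..<y]) @ p"
    using rev_concat_pal[OF r_pals lp_props(2)] by (simp add: rev_map)
  have "occurs_at (concat (map r [x..<y]) @ p) u (pos x)"
    using U_seg[OF xy] strict_mono_less_eq[OF pos_smono, of x y] xy
    by (simp add: occurs_at_seg)
  hence "occurs_at (concat (map r (rev [x..<y])) @ p) u (pos x)" using e by simp
  hence "map r (rev [x..<y]) = map r [x..<x + length (map r (rev [x..<y]))]"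
    by (intro decomp) auto
  hence mm: "map r (rev [x..<y]) = map r [x..<y]" using xy by simp
  have "r (y - 1 - t) = map r (rev [x..<y]) ! t" using t by (simp add: rev_nth)
  also have "\<dots> = r (x + t)" using mm t by simp
  finally show ?thesis using v_eq by simp
qed

lemma occ_of_prefix: "occurs_at X u y \<Longrightarrow> prefix p X \<Longrightarrow> occ y"
proof -
  assume o: "occurs_at X u y" and pX: "prefix p X"
  obtain z where z: "X = p @ z" using pX by (auto simp: prefix_def)
  have "seg u y (y + lp) = take lp (drop 0 (seg u y (y + length X)))"
    using take_drop_seg[of y 0 lp "y + length X" u] z by simp
  also have "\<dots> = p" using o z by (simp add: occurs_at_seg)
  finally show "occ y" using occ_seg by simp
qed

lemma v_rich: "rich v"
  unfolding rich_def
proof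
  fix n show "defect (pref v n) = 0"
  proof (induction n)
    case 0 thus ?case by (simp add: pref_def defect_Nil)
  next
    case (Suc n)
    define S where "S = lps (pref v (Suc n))"
    define x0 where "x0 = Suc n - length S"
    have Sseg: "S = seg v x0 (Suc n)" using lps_seg_gen[of v "Suc n"] S_def x0_def by simp
    have "suffix [v n] (pref v (Suc n))" by (simp add: pref_Suc_gen)
    hence "1 \<le> length S" using lps_longest[of "[v n]" "pref v (Suc n)"] S_def
      by (simp add: palindrome_def)
    hence x0n: "x0 \<le> n" using x0_def by simp
    have x0le: "x0 \<le> Suc n" by (simp add: x0_def)
    have Spal: "palu v x0 (Suc n)"
      using lps_pal[of "pref v (Suc n)"] palu_iff[OF x0le, of v] Sseg S_def by simp
    have "\<not> sublist S (pref v n)"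
    proof
      assume "sublist S (pref v n)"
      then obtain j where j: "j + length S \<le> n" "seg v j (j + length S) = S"
        using sublist_seg0[of S v n] by (auto simp: pref_seg)
      have lenS: "length S = Suc n - x0" using Sseg by simp
      have jx: "j < x0" using j(1) lenS x0n by simp
      have vj: "v (j + t) = v (x0 + t)" if "t < length S" for t
      proof -
        have "seg v j (j + length S) ! t = seg v x0 (Suc n) ! t" using j(2) Sseg by simp
        thus ?thesis using that lenS by (simp add: nth_seg)
      qed
      have A: "palu u (pos x0) (pos (Suc n) + lp)"
      proof (rule pal_v_to_u)
        fix t assume t: "t < Suc n - x0"
        show "v (x0 + t) = v (Suc n - 1 - t)"
          using palu_app_gen[OF Spal, of "x0 + t"] t by (simp add: algebra_simps)
      qed (use x0le in simp)
      have mr: "map r [j..<j + length S] = map r [x0..<Suc n]"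
      proof (rule nth_equalityI)
        fix t assume "t < length (map r [j..<j + length S])"
        hence t: "t < length S" by simp
        have "r (j + t) = r (x0 + t)" using vj[OF t] v_eq by simp
        thus "map r [j..<j + length S] ! t = map r [x0..<Suc n] ! t" using t lenS x0le by (simp del: upt_Suc)
      qed (use lenS x0n in simp)
      have Ueq: "seg u (pos j) (pos (j + length S) + lp) = seg u (pos x0) (pos (Suc n) + lp)"
        using U_seg[of j "j + length S"] U_seg[OF x0le] mr by simp
      define N where "N = pos (Suc n) + lp"
      have mN: "m0 < N" using lp_props(1) pos_less[of n] N_def by simp
      define t where "t = N - length (lps (pref u N))"
      note Z = zone[OF mN, folded t_def]
      have px0N: "pos x0 \<le> N" using strict_mono_less_eq[OF pos_smono, of x0 "Suc n"] x0le N_def by simp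
      have tx: "t \<le> pos x0" using Z(4)[OF px0N] A N_def by simp
      show False
      proof (cases "t = pos x0")
        case True
        have pj: "pos j < pos x0" using strict_mono_less[OF pos_smono] jx by simp
        have "length (seg u (pos j) (pos (j + length S) + lp)) = length (seg u (pos x0) N)"
          using Ueq N_def by simp
        hence "pos j + (N - pos x0) = pos (j + length S) + lp"
          using strict_mono_less_eq[OF pos_smono, of j "j + length S"] px0N by simp
        hence "occurs_at (seg u (pos x0) N) u (pos j)"
          using Ueq N_def by (simp add: occurs_at_seg)
        thus False using Z(3)[of "pos j"] pj True by simp
      next
        case False
        hence tl: "t < pos x0" using tx by simp
        have "occurs_at p u (t + N - pos (Suc n) - length p)"
          using palu_mirror_occ[OF Z(2) lp_props(2) occ_pos[of "Suc n", unfolded occ_def]] tl px0N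
            strict_mono_less_eq[OF pos_smono, of x0 "Suc n"] x0le N_def by simp
        hence "occ t" using N_def by (simp add: occ_def)
        then obtain j' where j': "pos j' = t" using occ_is_pos by blast
        have jx': "j' < x0" using tl j' strict_mono_less[OF pos_smono] by blast
        have Pj: "palu u (pos j') (pos (Suc n) + lp)" using Z(2) j' N_def by simp
        have "palu v j' (Suc n)" unfolding palu_def
        proof (intro allI impI)
          fix y assume y: "j' \<le> y" "y < Suc n"
          have "v (j' + (y - j')) = v (Suc n - 1 - (y - j'))"
            using pal_u_to_v[OF _ Pj, of "y - j'"] y jx' x0le by simp
          thus "v y = v (j' + Suc n - 1 - y)" using y by (simp add: add.commute)
        qed
        hence "palindrome (seg v j' (Suc n))" using palu_iff[of j' "Suc n" v] jx' x0le by simp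
        moreover have "suffix (seg v j' (Suc n)) (pref v (Suc n))"
          using seg_split[of 0 j' "Suc n" v] jx' x0le by (simp add: pref_seg suffix_def)
        ultimately have "length (seg v j' (Suc n)) \<le> length S"
          using lps_longest S_def by blast
        thus False using jx' lenS x0le x0n by simp
      qed
    qed
    thus ?case using Suc.IH defect_snoc[of "pref v n" "v n"] S_def by (simp add: pref_Suc_gen)
  qed
qed

lemma v_ur: "uniformly_recurrent v"
  unfolding uniformly_recurrent_def
proof (intro allI impI)
  fix w assume "\<exists>i. occurs_at w v i"
  then obtain i where wi: "occurs_at w v i" by blast
  define m where "m = length w"
  define X where "X = concat (map r [i..<i + m]) @ p"
  have "occurs_at X u (pos i)"
    using U_seg[of i "i + m"] strict_mono_less_eq[OF pos_smono, of i "i + m"]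
    by (simp add: X_def occurs_at_seg)
  then obtain K where K: "\<And>N. \<exists>y. N \<le> y \<and> y \<le> N + K \<and> occurs_at X u y" using ur_gap by blast
  have pX: "prefix p X" unfolding X_def by (rule prefix_p_concat) auto
  show "\<exists>K. \<forall>n. \<exists>i. n \<le> i \<and> i \<le> n + K \<and> occurs_at w v i"
  proof (rule exI[of _ K], rule allI)
    fix N
    obtain y where y: "pos N \<le> y" "y \<le> pos N + K" "occurs_at X u y" using K by blast
    obtain k where k: "pos k = y" using occ_is_pos occ_of_prefix[OF y(3) pX] by blast
    have Nk: "N \<le> k" using y(1) k strict_mono_less_eq[OF pos_smono, of N k] by simp
    have kN: "k \<le> N + K"
    proof (rule ccontr)
      assume "\<not> k \<le> N + K"
      hence "N + K + 1 \<le> k" by simp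
      hence "pos (N + (K + 1)) \<le> pos k" using strict_mono_less_eq[OF pos_smono] by simp
      moreover have "pos N + (K + 1) \<le> pos (N + (K + 1))" by (rule pos_add)
      ultimately show False using y(2) k by simp
    qed
    have "map r [i..<i + m] = map r [k..<k + length (map r [i..<i + m])]"
      using y(3) k unfolding X_def by (intro decomp) auto
    hence mm: "map r [i..<i + m] = map r [k..<k + m]" by simp
    have "occurs_at w v k" unfolding occurs_at_nth
    proof (intro allI impI)
      fix t assume t: "t < length w"
      have "r (i + t) = map r [i..<i + m] ! t" using t m_def by simp
      also have "\<dots> = r (k + t)" using mm t m_def by simp
      finally have "v (i + t) = v (k + t)" using v_eq by simp
      thus "v (k + t) = w ! t" using wi t unfolding occurs_at_nth by simp
    qed
    thus "\<exists>i. N \<le> i \<and> i \<le> N + K \<and> occurs_at w v i" using Nk kN by blast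
  qed
qed

lemma v_morph: "morph_image phi v u"
proof -
  have e: "concat (map (\<lambda>i. phi (v i)) [0..<n]) = seg u 0 (pos n)" for n
  proof -
    have "concat (map (\<lambda>i. phi (v i)) [0..<n]) = concat (map r [0..<n])" by (simp add: phi_v)
    also have "\<dots> = seg u 0 (pos n)" using seg_concat[of 0 n] by simp
    finally show ?thesis .
  qed
  show ?thesis unfolding morph_image_def Let_def e by (simp add: pref_seg)
qed

lemma v_Pret: "class_Pret (enc ` range r) phi"
proof -
  have A: "\<forall>b\<in>enc ` range r. palindrome (phi b @ p)"
    using phi_v r_pal by (auto simp: v_def[symmetric])
  have B: "\<forall>b\<in>enc ` range r. phi b \<noteq> [] \<and> occ_positions p (phi b @ p) = {0, length (phi b)}"
    using phi_v r_ne r_occ by (auto simp: v_def[symmetric])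
  have C: "inj_on phi (enc ` range r)" unfolding phi_def by (rule inj_on_inv_into) simp
  show ?thesis unfolding class_Pret_def using lp_props(2) A B C by blast
qed

end

theorem theorem5p5:
  fixes u :: "nat \<Rightarrow> 'a"
  assumes "finite (range u)"
    and "uniformly_recurrent u"
    and "finite_defect u"
  shows "\<exists>(B :: nat set) (v :: nat \<Rightarrow> nat) (\<phi> :: nat \<Rightarrow> 'a list).
           finite B \<and> range v \<subseteq> B \<and> rich v \<and> class_Pret B \<phi> \<and>
           morph_image \<phi> v u \<and> uniformly_recurrent v"
proof -
  interpret W u using assms by unfold_locales
  have "finite (enc ` range r)" using finite_R by simp
  moreover have "range v \<subseteq> enc ` range r" by (auto simp: v_def)
  ultimately show ?thesis using v_rich v_Pret v_morph v_ur by blast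
qed


end
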